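(* Let $\mathcal A$ be a toric arrangement in $T$ equal to its saturation, let $\mathcal F$ be a smooth projective fan compatible with $\mathcal A$, let $\mathcal G$ be a smooth projective refinement of $\mathcal F$, and let $\psi^{\mathcal F}_{\mathcal G}:X_{\mathcal G}\to X_{\mathcal F}$ be the unique $T$-equivariant projective morphism of toric varieties extending the identity of $T$. Then for each layer $\mathcal K_{\Gamma,\phi}\in\mathcal A$, the preimage under $\psi^{\mathcal F}_{\mathcal G}$ of the closure of $\mathcal K_{\Gamma,\phi}$ in $X_{\mathcal F}$ equals the closure of $\mathcal K_{\Gamma,\phi}$ in $X_{\mathcal G}$. (In particular $\mathcal G$ is also compatible with $\mathcal A$.)
   Context: $T$ is a complex algebraic torus with character lattice $X^*(T)$, $V=X_*(T)\otimes\mathbb R$. A layer is $\mathcal K_{\Gamma,\phi}=\{t\in T:\chi(t)=\phi(\chi)\ \forall\chi\in\Gamma\}$, where $\Gamma$ is a split direct summand of $X^*(T)$ and $\phi:\Gamma\to\mathbb C^*$ a homomorphism. A toric arrangement is a finite set of layers; its saturation is the set of all connected components of intersections of its layers, and we assume $\mathcal A$ equals its saturation. For a toric variety, $X_{\mathcal F}$ denotes the smooth projective $T$-toric variety of the smooth projective fan $\mathcal F$. A finite set $\{\chi_1,\dots,\chi_s\}\subset X^*(T)$ has equal sign with respect to $\mathcal F$ if each function $\langle\chi_i,-\rangle$ is either $\ge0$ on $C$ or $\le 0$ on $C$ for every cone $C\in\mathcal F$. $\mathcal F$ is compatible with $\mathcal A$ if for every pair of layers $\mathcal K_{\Gamma,\phi}\subseteq\mathcal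 K_{\Gamma',\psi}$ in $\mathcal A$ there is an integral basis of $\Gamma$ having equal sign with respect to $\mathcal F$ whose intersection with $\Gamma'$ is a basis of $\Gamma'$ (having equal sign). A refinement $\mathcal G$ of $\mathcal F$ is a fan each of whose cones is contained in a cone of $\mathcal F$ and such that every cone of $\mathcal F$ is a union of cones of $\mathcal G$. *)

theory Defs
  imports "HOL-Analysis.Analysis"
begin

text \<open>We fix an identification T = (C^*)^n given by a basis.
  Characters X^*(T) = Z^n are  int^'n , cocharacters X_*(T) = Z^n are int^'n,
  V = X_*(T) (x) R = real^'n.\<close>

definition torus :: "(complex^'n) set" where
  "torus = {t. \<forall>i. t$i \<noteq> 0}"

definition char_val :: "int^'n \<Rightarrow> complex^'n \<Rightarrow> complex" where
  "char_val chi t = (\<Prod>i\<in>UNIV. (t$i) powi (chi$i))"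

definition pairing :: "int^'n \<Rightarrow> real^'n \<Rightarrow> real" where
  "pairing chi v = (\<Sum>i\<in>UNIV. of_int (chi$i) * v$i)"

definition lat_to_real :: "int^'n \<Rightarrow> real^'n" where
  "lat_to_real u = (\<chi> i. of_int (u$i))"

definition lattice_subgroup :: "(int^'n) set \<Rightarrow> bool" where
  "lattice_subgroup G \<longleftrightarrow> 0 \<in> G \<and> (\<forall>a\<in>G. \<forall>b\<in>G. a + b \<in> G \<and> - a \<in> G)"

definition split_summand :: "(int^'n) set \<Rightarrow> bool" where
  "split_summand G \<longleftrightarrow> lattice_subgroup G \<and>
     (\<exists>D. lattice_subgroup D \<and> G \<inter> D = {0} \<and> {a + b |a b. a \<in> G \<and> b \<in> D} = UNIV)"

definition char_hom :: "(int^'n) set \<Rightarrow> (int^'n \<Rightarrow> complex) \<Rightarrow> bool" where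
  "char_hom G phi \<longleftrightarrow> (\<forall>a\<in>G. phi a \<noteq> 0) \<and> (\<forall>a\<in>G. \<forall>b\<in>G. phi (a + b) = phi a * phi b)"

definition layer :: "(int^'n) set \<Rightarrow> (int^'n \<Rightarrow> complex) \<Rightarrow> (complex^'n) set" where
  "layer G phi = {t \<in> torus. \<forall>chi\<in>G. char_val chi t = phi chi}"

definition is_layer :: "(complex^'n) set \<Rightarrow> bool" where
  "is_layer K \<longleftrightarrow> (\<exists>G phi. split_summand G \<and> char_hom G phi \<and> K = layer G phi)"

definition int_span :: "(int^'n) set \<Rightarrow> (int^'n) set" where
  "int_span B = {(\<Sum>b\<in>B. c b *s b) | c. True}"

definition integral_basis :: "(int^'n) set \<Rightarrow> (int^'n) set \<Rightarrow> bool" where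
  "integral_basis G B \<longleftrightarrow> finite B \<and> B \<subseteq> G \<and>
     (\<forall>c. (\<Sum>b\<in>B. c b *s b) = 0 \<longrightarrow> (\<forall>b\<in>B. c b = 0)) \<and> int_span B = G"

definition saturated_toric_arrangement :: "(complex^'n) set set \<Rightarrow> bool" where
  "saturated_toric_arrangement A \<longleftrightarrow> finite A \<and> (\<forall>K\<in>A. is_layer K) \<and>
     A = {connected_component_set (\<Inter>B) x | B x. B \<subseteq> A \<and> B \<noteq> {} \<and> x \<in> \<Inter>B}"

definition gen_cone :: "(int^'n) set \<Rightarrow> (real^'n) set" where
  "gen_cone S = {(\<Sum>u\<in>S. c u *\<^sub>R lat_to_real u) | c. \<forall>u\<in>S. c u \<ge> 0}"

definition smooth_cone :: "(real^'n) set \<Rightarrow> bool" where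
  "smooth_cone \<sigma> \<longleftrightarrow> (\<exists>B S. integral_basis UNIV B \<and> S \<subseteq> B \<and> \<sigma> = gen_cone S)"

definition fan :: "(real^'n) set set \<Rightarrow> bool" where
  "fan F \<longleftrightarrow> finite F \<and> F \<noteq> {} \<and>
     (\<forall>\<sigma>\<in>F. \<exists>S. finite S \<and> \<sigma> = gen_cone S) \<and>
     (\<forall>\<sigma>\<in>F. \<forall>\<tau>. \<tau> face_of \<sigma> \<and> \<tau> \<noteq> {} \<longrightarrow> \<tau> \<in> F) \<and>
     (\<forall>\<sigma>\<in>F. \<forall>\<tau>\<in>F. (\<sigma> \<inter> \<tau>) face_of \<sigma> \<and> (\<sigma> \<inter> \<tau>) face_of \<tau>) \<and>
     (\<forall>\<sigma>\<in>F. \<forall>v\<in>\<sigma>. - v \<in> \<sigma> \<longrightarrow> v = 0)"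

definition complete_fan :: "(real^'n) set set \<Rightarrow> bool" where
  "complete_fan F \<longleftrightarrow> \<Union>F = UNIV"

definition maximal_cone :: "(real^'n) set set \<Rightarrow> (real^'n) set \<Rightarrow> bool" where
  "maximal_cone F \<sigma> \<longleftrightarrow> \<sigma> \<in> F \<and> \<not> (\<exists>\<tau>\<in>F. \<sigma> \<subset> \<tau>)"

text \<open>Projectivity: existence of a strictly convex support function (Cox-Little-Schenck 7.2).\<close>
definition projective_fan :: "(real^'n) set set \<Rightarrow> bool" where
  "projective_fan F \<longleftrightarrow> (\<exists>h :: real^'n \<Rightarrow> real. \<forall>\<sigma>. maximal_cone F \<sigma> \<longrightarrow>
     (\<exists>m :: int^'n. (\<forall>v\<in>\<sigma>. pairing m v = h v) \<and> (\<forall>v. v \<notin> \<sigma> \<longrightarrow> pairing m v < h v)))"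

definition smooth_projective_fan :: "(real^'n) set set \<Rightarrow> bool" where
  "smooth_projective_fan F \<longleftrightarrow> fan F \<and> (\<forall>\<sigma>\<in>F. smooth_cone \<sigma>) \<and> complete_fan F \<and> projective_fan F"

definition refinement :: "(real^'n) set set \<Rightarrow> (real^'n) set set \<Rightarrow> bool" where
  "refinement G F \<longleftrightarrow> fan G \<and> (\<forall>\<tau>\<in>G. \<exists>\<sigma>\<in>F. \<tau> \<subseteq> \<sigma>) \<and>
     (\<forall>\<sigma>\<in>F. \<sigma> = \<Union>{\<tau>\<in>G. \<tau> \<subseteq> \<sigma>})"

definition equal_sign :: "(real^'n) set set \<Rightarrow> (int^'n) set \<Rightarrow> bool" where
  "equal_sign F X \<longleftrightarrow> (\<forall>chi\<in>X. \<forall>C\<in>F.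
     (\<forall>v\<in>C. pairing chi v \<ge> 0) \<or> (\<forall>v\<in>C. pairing chi v \<le> 0))"

definition compatible :: "(real^'n) set set \<Rightarrow> (complex^'n) set set \<Rightarrow> bool" where
  "compatible F A \<longleftrightarrow> (\<forall>G phi G' psi.
     split_summand G \<and> char_hom G phi \<and> split_summand G' \<and> char_hom G' psi \<and>
     layer G phi \<in> A \<and> layer G' psi \<in> A \<and> layer G phi \<subseteq> layer G' psi \<longrightarrow>
     (\<exists>B. integral_basis G B \<and> equal_sign F B \<and> integral_basis G' (B \<inter> G')))"

definition perp :: "(real^'n) set \<Rightarrow> (int^'n) set" where
  "perp \<sigma> = {m. \<forall>v\<in>\<sigma>. pairing m v = 0}"

definition dual_lat :: "(real^'n) set \<Rightarrow> (int^'n) set" where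
  "dual_lat \<sigma> = {m. \<forall>v\<in>\<sigma>. pairing m v \<ge> 0}"

type_synonym 'n toric_pt = "(real^'n) set \<times> (int^'n \<Rightarrow> complex)"

text \<open>A point of X_F is written as (tau, gamma): it lies in the orbit O(tau), and gamma is the
  group homomorphism perp(tau) -> C^* determining it, extended by 0 outside perp(tau).
  For a cone sigma containing tau, gamma restricted to dual(sigma) is the corresponding
  semigroup homomorphism, i.e. the point of the affine chart U_sigma.\<close>
definition toric_points :: "(real^'n) set set \<Rightarrow> 'n toric_pt set" where
  "toric_points F = {(\<tau>, \<gamma>). \<tau> \<in> F \<and> (\<forall>m. m \<notin> perp \<tau> \<longrightarrow> \<gamma> m = 0) \<and>
      (\<forall>m\<in>perp \<tau>. \<gamma> m \<noteq> 0) \<and> (\<forall>a\<in>perp \<tau>. \<forall>b\<in>perp \<tau>. \<gamma> (a + b) = \<gamma> a * \<gamma> b)}"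

definition toric_chart :: "(real^'n) set set \<Rightarrow> (real^'n) set \<Rightarrow> 'n toric_pt set" where
  "toric_chart F \<sigma> = {p \<in> toric_points F. fst p \<subseteq> \<sigma>}"

text \<open>Analytic topology on U_sigma: induced by the coordinate functions chi^m, m in dual(sigma).\<close>
definition chart_topology :: "(real^'n) set set \<Rightarrow> (real^'n) set \<Rightarrow> 'n toric_pt topology" where
  "chart_topology F \<sigma> = pullback_topology (toric_chart F \<sigma>)
      (\<lambda>p. restrict (snd p) (dual_lat \<sigma>)) (product_topology (\<lambda>_. euclidean) (dual_lat \<sigma>))"

definition toric_topology :: "(real^'n) set set \<Rightarrow> 'n toric_pt topology" where
  "toric_topology F = topology (\<lambda>U. U \<subseteq> toric_points F \<and>
      (\<forall>\<sigma>\<in>F. openin (chart_topology F \<sigma>) (U \<inter> toric_chart F \<sigma>)))"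

text \<open>Embedding of the torus T as the open orbit O({0}).\<close>
definition torus_emb :: "complex^'n \<Rightarrow> 'n toric_pt" where
  "torus_emb t = ({0}, \<lambda>m. char_val m t)"

text \<open>The toric morphism X_G -> X_F induced by the identity of N (G refining F): a point of
  orbit O(tau) maps to the orbit O(sigma), sigma the smallest cone of F containing tau,
  by restricting the semigroup homomorphism.\<close>
definition min_cone :: "(real^'n) set set \<Rightarrow> (real^'n) set \<Rightarrow> (real^'n) set" where
  "min_cone F \<tau> = \<Inter>{\<sigma>\<in>F. \<tau> \<subseteq> \<sigma>}"

definition toric_refinement_map ::
    "(real^'n) set set \<Rightarrow> 'n toric_pt \<Rightarrow> 'n toric_pt" where
  "toric_refinement_map F p =
     (let \<sigma> = min_cone F (fst p) in (\<sigma>, \<lambda>m. if m \<in> perp \<sigma> then snd p m else 0))"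

end

theory Submission
  imports Defs
begin


lemma hom_zero: assumes "lattice_subgroup H" "char_hom H h" shows "h 0 = 1"
proof -
  have "0 \<in> H" using assms unfolding lattice_subgroup_def by auto
  then have "h (0+0) = h 0 * h 0" "h 0 \<noteq> 0" using assms unfolding char_hom_def by blast+
  then show ?thesis by simp
qed

lemma hom_neg: assumes "lattice_subgroup H" "char_hom H h" "a \<in> H"
  shows "h (-a) = inverse (h a)" "-a \<in> H"
proof -
  show na: "-a \<in> H" using assms unfolding lattice_subgroup_def by auto
  have "h (a + -a) = h a * h (-a)" "h a \<noteq> 0" using assms na unfolding char_hom_def by blast+
  then show "h (-a) = inverse (h a)" using hom_zero[OF assms(1,2)] by (simp add: field_simps)
qed

lemma hom_nat: assumes "lattice_subgroup H" "char_hom H h" "a \<in> H"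
  shows "(int n *s a) \<in> H \<and> h (int n *s a) = h a ^ n"
proof (induction n)
  case 0
  then show ?case using hom_zero[OF assms(1,2)] assms(1) unfolding lattice_subgroup_def
    by (simp add: vec_eq_iff)
next
  case (Suc n)
  have e: "int (Suc n) *s a = a + int n *s a" by (simp add: vec_eq_iff algebra_simps)
  show ?case unfolding e using Suc assms unfolding lattice_subgroup_def char_hom_def by auto
qed

lemma hom_smult: assumes "lattice_subgroup H" "char_hom H h" "a \<in> H"
  shows "(c *s a) \<in> H \<and> h (c *s a) = h a powi c"
proof (cases "c \<ge> 0")
  case True
  then obtain n where n: "c = int n" using nonneg_int_cases by blast
  then show ?thesis using hom_nat[OF assms, of n] by simp
next
  case False
  obtain n where n: "c = - int n" using False by (intro that[of "nat (-c)"]) simp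
  have e: "c *s a = - (int n *s a)" using n by (simp add: vec_eq_iff)
  show ?thesis unfolding e using hom_nat[OF assms, of n] hom_neg[OF assms(1,2), of "int n *s a"] n
    by (simp add: power_int_minus)
qed

lemma hom_sum: assumes "lattice_subgroup H" "char_hom H h" "finite I" "\<forall>i\<in>I. f i \<in> H"
  shows "sum f I \<in> H \<and> h (sum f I) = (\<Prod>i\<in>I. h (f i))"
  using assms(3,4)
proof (induction I rule: finite_induct)
  case empty
  then show ?case using hom_zero[OF assms(1,2)] assms(1) unfolding lattice_subgroup_def by simp
next
  case (insert x F)
  then show ?case using assms(1,2) unfolding lattice_subgroup_def char_hom_def by auto
qed



definition ip :: "int^'n \<Rightarrow> int^'n \<Rightarrow> int" where
  "ip m u = (\<Sum>i\<in>UNIV. m$i * u$i)"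

lemma pairing_inner: "pairing m v = lat_to_real m \<bullet> v"
  unfolding pairing_def lat_to_real_def inner_vec_def by simp

lemma pairing_lat: "pairing m (lat_to_real u) = of_int (ip m u)"
  unfolding pairing_def lat_to_real_def ip_def by simp

lemma lat_add: "lat_to_real (a + b) = lat_to_real a + lat_to_real b"
  unfolding lat_to_real_def by (simp add: vec_eq_iff)
lemma lat_neg: "lat_to_real (- a) = - lat_to_real a"
  unfolding lat_to_real_def by (simp add: vec_eq_iff)
lemma lat_smult: "lat_to_real (c *s a) = of_int c *\<^sub>R lat_to_real a"
  unfolding lat_to_real_def by (simp add: vec_eq_iff)
lemma lat_sum: "lat_to_real (sum f I) = (\<Sum>i\<in>I. lat_to_real (f i))"
  by (induction I rule: infinite_finite_induct) (auto simp: lat_add lat_to_real_def vec_eq_iff)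

lemma pairing_neg: "pairing (-a) v = - pairing a v"
  by (simp add: pairing_inner lat_neg)

lemma pairing_span: "pairing (\<Sum>b\<in>B. c b *s b) v = (\<Sum>b\<in>B. of_int (c b) * pairing b v)"
  by (simp add: pairing_inner lat_sum lat_smult inner_sum_left)

lemma pairing_gen: "finite S \<Longrightarrow> pairing m (\<Sum>u\<in>S. c u *\<^sub>R lat_to_real u) = (\<Sum>u\<in>S. c u * of_int (ip m u))"
  by (simp add: pairing_inner inner_sum_right pairing_lat[unfolded pairing_inner])

lemma dual_basis:
  assumes "integral_basis UNIV (B0 :: (int^'n) set)"
  shows "\<exists>md. (\<forall>u\<in>B0. \<forall>u'\<in>B0. ip (md u) u' = (if u = u' then 1 else 0)) \<and>
             (\<forall>x. x = (\<Sum>u\<in>B0. ip x u *s md u))"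
proof -
  have fin: "finite B0" and ind: "\<And>c. (\<Sum>b\<in>B0. c b *s b) = 0 \<Longrightarrow> (\<forall>b\<in>B0. c b = 0)"
    and sp: "int_span B0 = UNIV" using assms unfolding integral_basis_def by auto
  have "\<forall>i. \<exists>c. axis i 1 = (\<Sum>b\<in>B0. c b *s b)" using sp unfolding int_span_def by blast
  then obtain c where c: "\<And>i. axis i 1 = (\<Sum>b\<in>B0. c i b *s b)" by metis
  have cc: "(\<Sum>u\<in>B0. c j u * u$i) = (if i = j then 1 else 0)" for i j
  proof -
    have "(axis j 1 :: int^'n)$i = (\<Sum>u\<in>B0. c j u * u$i)" by (subst c) (simp add: sum_component)
    then show ?thesis by (simp add: axis_def)
  qed
  define md where "md u = (\<chi> i. c i u)" for u
  have P2: "x = (\<Sum>u\<in>B0. ip x u *s md u)" for x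
  proof -
    have "(\<Sum>u\<in>B0. ip x u *s md u)$j = x$j" for j
    proof -
      have "(\<Sum>u\<in>B0. ip x u *s md u)$j = (\<Sum>u\<in>B0. (\<Sum>i\<in>UNIV. x$i * u$i) * c j u)"
        by (simp add: sum_component md_def ip_def)
      also have "\<dots> = (\<Sum>u\<in>B0. \<Sum>i\<in>UNIV. x$i * (c j u * u$i))"
        by (rule sum.cong[OF refl]) (simp add: sum_distrib_right sum_distrib_left mult_ac)
      also have "\<dots> = (\<Sum>i\<in>UNIV. \<Sum>u\<in>B0. x$i * (c j u * u$i))" by (rule sum.swap)
      also have "\<dots> = (\<Sum>i\<in>UNIV. x$i * (\<Sum>u\<in>B0. c j u * u$i))"
        by (simp add: sum_distrib_left)
      also have "\<dots> = x$j" by (simp add: cc if_distrib[of "\<lambda>z. _ * z"] cong: if_cong)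
      finally show ?thesis .
    qed
    then show ?thesis by (simp add: vec_eq_iff)
  qed
  have P1: "ip (md u) u' = (if u = u' then 1 else 0)" if u: "u \<in> B0" and u': "u' \<in> B0" for u u'
  proof -
    define d where "d v = (\<Sum>i\<in>UNIV. u'$i * c i v) - (if v = u' then 1 else 0)" for v
    have "(\<Sum>v\<in>B0. d v *s v) = 0"
    proof -
      have "(\<Sum>v\<in>B0. d v *s v)$j = 0" for j
      proof -
        have "(\<Sum>v\<in>B0. d v *s v)$j = (\<Sum>v\<in>B0. (\<Sum>i\<in>UNIV. u'$i * c i v) * v$j)
             - (\<Sum>v\<in>B0. (if v = u' then 1 else 0) * v$j)"
          by (simp add: sum_component d_def left_diff_distrib sum_subtractf)
        also have "(\<Sum>v\<in>B0. (\<Sum>i\<in>UNIV. u'$i * c i v) * v$j) = (\<Sum>v\<in>B0. \<Sum>i\<in>UNIV. u'$i * (c i v * v$j))"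
          by (rule sum.cong[OF refl]) (simp add: sum_distrib_right sum_distrib_left mult_ac)
        also have "\<dots> = (\<Sum>i\<in>UNIV. \<Sum>v\<in>B0. u'$i * (c i v * v$j))" by (rule sum.swap)
        also have "\<dots> = (\<Sum>i\<in>UNIV. u'$i * (\<Sum>v\<in>B0. c i v * v$j))"
          by (simp add: sum_distrib_left)
        also have "\<dots> = u'$j" by (simp add: cc if_distrib[of "\<lambda>z. _ * z"] cong: if_cong)
        also have "(\<Sum>v\<in>B0. (if v = u' then 1 else 0) * v$j) = u'$j"
          using u' fin by (simp add: sum.delta_remove if_distrib[of "\<lambda>z. z * _"] cong: if_cong)
        finally show ?thesis by simp
      qed
      then show ?thesis by (simp add: vec_eq_iff)
    qed
    then have "d u = 0" using ind u by blast
    then show ?thesis unfolding d_def ip_def md_def by (simp add: mult.commute)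
  qed
  show ?thesis using P1 P2 by blast
qed



lemma zero_gen_cone: "0 \<in> gen_cone S"
  unfolding gen_cone_def by (rule CollectI, rule exI[of _ "\<lambda>_. 0"]) simp

lemma fan_D: assumes "fan F" shows "finite F" "F \<noteq> {}"
  "\<forall>\<sigma>\<in>F. \<exists>S. finite S \<and> \<sigma> = gen_cone S"
  "\<forall>\<sigma>\<in>F. \<forall>\<tau>. \<tau> face_of \<sigma> \<and> \<tau> \<noteq> {} \<longrightarrow> \<tau> \<in> F"
  "\<forall>\<sigma>\<in>F. \<forall>\<tau>\<in>F. (\<sigma> \<inter> \<tau>) face_of \<sigma> \<and> (\<sigma> \<inter> \<tau>) face_of \<tau>"
  "\<forall>\<sigma>\<in>F. \<forall>v\<in>\<sigma>. - v \<in> \<sigma> \<longrightarrow> v = 0"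
  using assms unfolding fan_def by blast+

lemma fan_gen: "fan F \<Longrightarrow> \<sigma> \<in> F \<Longrightarrow> \<exists>S. finite S \<and> \<sigma> = gen_cone S"
  using fan_D(3) by blast

lemma fan_zero: "fan F \<Longrightarrow> \<sigma> \<in> F \<Longrightarrow> 0 \<in> \<sigma>"
  using fan_gen zero_gen_cone by blast

lemma fan_convex: "fan F \<Longrightarrow> \<sigma> \<in> F \<Longrightarrow> convex \<sigma>"
proof -
  assume "fan F" "\<sigma> \<in> F"
  then have "(\<sigma> \<inter> \<sigma>) face_of \<sigma>" using fan_D(5) by blast
  then show ?thesis using face_of_imp_convex by auto
qed

lemma gen_cone_scale: assumes "x \<in> gen_cone S" "a \<ge> 0" shows "a *\<^sub>R x \<in> gen_cone S"
proof -
  obtain c where c: "x = (\<Sum>u\<in>S. c u *\<^sub>R lat_to_real u)" "\<forall>u\<in>S. c u \<ge> 0"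
    using assms(1) unfolding gen_cone_def by blast
  have "a *\<^sub>R x = (\<Sum>u\<in>S. (a * c u) *\<^sub>R lat_to_real u)" unfolding c by (simp add: scaleR_sum_right)
  then show ?thesis unfolding gen_cone_def using c(2) assms(2) by fastforce
qed

lemma fan_scale: "fan F \<Longrightarrow> \<sigma> \<in> F \<Longrightarrow> x \<in> \<sigma> \<Longrightarrow> a \<ge> 0 \<Longrightarrow> a *\<^sub>R x \<in> \<sigma>"
  using fan_gen gen_cone_scale by blast

lemma fan_zero_cone: assumes "fan F" shows "{0} \<in> F"
proof -
  obtain \<sigma> where s: "\<sigma> \<in> F" using fan_D(2)[OF assms] by blast
  have "{0} face_of \<sigma>"
    unfolding face_of_def
  proof (intro conjI ballI impI)
    show "{0} \<subseteq> \<sigma>" using fan_zero[OF assms s] by simp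
    show "convex {0::real^'a}" by simp
    fix a b x assume a: "a \<in> \<sigma>" and b: "b \<in> \<sigma>" and x: "x \<in> {0}" "x \<in> open_segment a b"
    then obtain u where u: "0 < u" "u < 1" "0 = (1 - u) *\<^sub>R a + u *\<^sub>R b" unfolding in_segment by auto
    have "(1 - u) *\<^sub>R a = - (u *\<^sub>R b)" using u(3) by (simp add: eq_neg_iff_add_eq_0)
    then have "u *\<^sub>R (- b) = (1 - u) *\<^sub>R a" by simp
    then have "(1/u) *\<^sub>R (u *\<^sub>R (- b)) = ((1-u)/u) *\<^sub>R a" by simp
    then have "- b = ((1-u)/u) *\<^sub>R a" using u(1) by simp
    then have "- b \<in> \<sigma>" using fan_scale[OF assms s a, of "(1-u)/u"] u by simp
    then have b0: "b = 0" using fan_D(6)[OF assms] s b by blast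
    then have "a = 0" using u by simp
    then show "a \<in> {0}" "b \<in> {0}" using b0 by auto
  qed
  then show ?thesis using fan_D(4)[OF assms] s by blast
qed

lemma fan_Inter: assumes "fan F" "finite C" "C \<noteq> {}" "C \<subseteq> F" shows "\<Inter>C \<in> F"
  using assms(2,3,4)
proof (induction C rule: finite_ne_induct)
  case (singleton x) then show ?case by simp
next
  case (insert x C)
  then have i: "\<Inter>C \<in> F" "x \<in> F" by auto
  have "(x \<inter> \<Inter>C) face_of x" using fan_D(5)[OF assms(1)] i by blast
  moreover have "x \<inter> \<Inter>C \<noteq> {}" using fan_zero[OF assms(1) i(1)] fan_zero[OF assms(1) i(2)] by blast
  ultimately show ?case using fan_D(4)[OF assms(1)] i by auto
qed

lemma min_cone_props: assumes "fan F" "refinement G F" "\<rho> \<in> G"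
  shows "min_cone F \<rho> \<in> F" "\<rho> \<subseteq> min_cone F \<rho>"
proof -
  have ne: "{\<sigma>\<in>F. \<rho> \<subseteq> \<sigma>} \<noteq> {}" using assms unfolding refinement_def by blast
  have fin: "finite {\<sigma>\<in>F. \<rho> \<subseteq> \<sigma>}" using fan_D(1)[OF assms(1)] by simp
  show "min_cone F \<rho> \<in> F" unfolding min_cone_def by (rule fan_Inter[OF assms(1) fin ne]) auto
  show "\<rho> \<subseteq> min_cone F \<rho>" unfolding min_cone_def by auto
qed

lemma kernel_face: assumes "fan F" "\<sigma> \<in> F" "(\<forall>v\<in>\<sigma>. pairing b v \<ge> 0) \<or> (\<forall>v\<in>\<sigma>. pairing b v \<le> 0)"
  shows "{v\<in>\<sigma>. pairing b v = 0} \<in> F"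
proof -
  have cv: "convex \<sigma>" using fan_convex[OF assms(1,2)] .
  have "(\<sigma> \<inter> {x. lat_to_real b \<bullet> x = 0}) face_of \<sigma>"
    using assms(3) face_of_Int_supporting_hyperplane_le[OF cv, where a="lat_to_real b" and b=0]
      face_of_Int_supporting_hyperplane_ge[OF cv, where a="lat_to_real b" and b=0]
    unfolding pairing_inner by blast
  moreover have "0 \<in> \<sigma> \<inter> {x. lat_to_real b \<bullet> x = 0}" using fan_zero[OF assms(1,2)] by simp
  ultimately have "\<sigma> \<inter> {x. lat_to_real b \<bullet> x = 0} \<in> F" using fan_D(4)[OF assms(1)] assms(2) by blast
  moreover have "{v\<in>\<sigma>. pairing b v = 0} = \<sigma> \<inter> {x. lat_to_real b \<bullet> x = 0}"
    unfolding pairing_inner by auto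
  ultimately show ?thesis by simp
qed

lemma min_cone_perp: assumes "fan F" "refinement G F" "\<rho> \<in> G" "equal_sign F B"
  "\<forall>v\<in>\<rho>. \<forall>b\<in>B. pairing b v = 0"
  shows "\<forall>v\<in>min_cone F \<rho>. \<forall>b\<in>B. pairing b v = 0"
proof (intro ballI)
  fix v b assume v: "v \<in> min_cone F \<rho>" and b: "b \<in> B"
  let ?s = "min_cone F \<rho>"
  have s: "?s \<in> F" "\<rho> \<subseteq> ?s" using min_cone_props[OF assms(1-3)] by auto
  have "{w\<in>?s. pairing b w = 0} \<in> F"
    using kernel_face[OF assms(1) s(1)] assms(4) b s(1) unfolding equal_sign_def by blast
  moreover have "\<rho> \<subseteq> {w\<in>?s. pairing b w = 0}" using s(2) assms(5) b by auto
  ultimately have "?s \<subseteq> {w\<in>?s. pairing b w = 0}" unfolding min_cone_def by blast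
  then show "pairing b v = 0" using v by blast
qed



lemma toric_istop: "istopology (\<lambda>U. U \<subseteq> toric_points F \<and>
      (\<forall>\<sigma>\<in>F. openin (chart_topology F \<sigma>) (U \<inter> toric_chart F \<sigma>)))"
proof -
  have A: "S \<inter> T \<subseteq> toric_points F \<and> (\<forall>\<sigma>\<in>F. openin (chart_topology F \<sigma>) (S \<inter> T \<inter> toric_chart F \<sigma>))"
    if S: "S \<subseteq> toric_points F \<and> (\<forall>\<sigma>\<in>F. openin (chart_topology F \<sigma>) (S \<inter> toric_chart F \<sigma>))"
    and T: "T \<subseteq> toric_points F \<and> (\<forall>\<sigma>\<in>F. openin (chart_topology F \<sigma>) (T \<inter> toric_chart F \<sigma>))" for S T
  proof -
    have "S \<inter> T \<inter> toric_chart F \<sigma> = (S \<inter> toric_chart F \<sigma>) \<inter> (T \<inter> toric_chart F \<sigma>)" for \<sigma> by blast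
    then show ?thesis using S T by (auto intro: openin_Int)
  qed
  have B: "\<Union>K \<subseteq> toric_points F \<and> (\<forall>\<sigma>\<in>F. openin (chart_topology F \<sigma>) (\<Union>K \<inter> toric_chart F \<sigma>))"
    if K: "\<forall>U\<in>K. U \<subseteq> toric_points F \<and> (\<forall>\<sigma>\<in>F. openin (chart_topology F \<sigma>) (U \<inter> toric_chart F \<sigma>))" for K
  proof -
    have e: "\<Union>K \<inter> toric_chart F \<sigma> = \<Union>((\<lambda>U. U \<inter> toric_chart F \<sigma>) ` K)" for \<sigma> by blast
    have "openin (chart_topology F \<sigma>) (\<Union>K \<inter> toric_chart F \<sigma>)" if "\<sigma> \<in> F" for \<sigma>
      unfolding e by (rule openin_Union) (use K that in blast)
    then show ?thesis using K by blast
  qed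
  show ?thesis unfolding istopology_def
    apply (rule conjI)
     apply (intro allI impI)
     apply (erule (1) A)
    apply (intro allI impI)
    apply (erule B)
    done
qed

lemma openin_toric: "openin (toric_topology F) U \<longleftrightarrow> U \<subseteq> toric_points F \<and>
      (\<forall>\<sigma>\<in>F. openin (chart_topology F \<sigma>) (U \<inter> toric_chart F \<sigma>))"
  unfolding toric_topology_def topology_inverse'[OF toric_istop] ..

lemma topspace_chart: "topspace (chart_topology F \<sigma>) = toric_chart F \<sigma>"
  unfolding chart_topology_def topspace_pullback_topology by auto

lemma chart_sub: "toric_chart F \<sigma> \<subseteq> toric_points F"
  unfolding toric_chart_def by auto

lemma topspace_toric: "topspace (toric_topology F) = toric_points F"
proof -
  have "toric_points F \<inter> toric_chart F \<sigma> = topspace (chart_topology F \<sigma>)" for \<sigma>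
    using chart_sub[of F \<sigma>] unfolding topspace_chart by blast
  then have "openin (toric_topology F) (toric_points F)"
    unfolding openin_toric by simp
  then have "toric_points F \<subseteq> topspace (toric_topology F)" by (rule openin_subset)
  moreover have "topspace (toric_topology F) \<subseteq> toric_points F"
    using openin_topspace[of "toric_topology F"] unfolding openin_toric by blast
  ultimately show ?thesis by blast
qed

lemma closedin_toric: assumes "Z \<subseteq> toric_points F" "\<forall>\<sigma>\<in>F. closedin (chart_topology F \<sigma>) (Z \<inter> toric_chart F \<sigma>)"
  shows "closedin (toric_topology F) Z"
proof -
  have "openin (chart_topology F \<sigma>) ((toric_points F - Z) \<inter> toric_chart F \<sigma>)" if s: "\<sigma> \<in> F" for \<sigma>
  proof -
    have e: "(toric_points F - Z) \<inter> toric_chart F \<sigma> = topspace (chart_topology F \<sigma>) - (Z \<inter> toric_chart F \<sigma>)"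
      using chart_sub[of F \<sigma>] unfolding topspace_chart by blast
    have "closedin (chart_topology F \<sigma>) (Z \<inter> toric_chart F \<sigma>)" using assms(2) s by blast
    then show ?thesis unfolding e closedin_def by (elim conjE)
  qed
  then have "openin (toric_topology F) (toric_points F - Z)" unfolding openin_toric by blast
  then show ?thesis unfolding closedin_def topspace_toric using assms(1) by blast
qed

lemma coord_cont: assumes "m \<in> dual_lat \<sigma>"
  shows "continuous_map (chart_topology F \<sigma>) euclidean (\<lambda>p. snd p m)"
proof -
  have c: "continuous_map (chart_topology F \<sigma>) euclidean
    ((\<lambda>x. x m) \<circ> (\<lambda>p. restrict (snd p) (dual_lat \<sigma>)))"
    unfolding chart_topology_def
    by (rule continuous_map_pullback) (rule continuous_map_product_projection[OF assms])
  have e: "((\<lambda>x. x m) \<circ> (\<lambda>p. restrict (snd p) (dual_lat \<sigma>))) = (\<lambda>p. snd p m)"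
    using assms by (auto simp: fun_eq_iff)
  show ?thesis using c unfolding e .
qed

lemma coord_closed: assumes "m \<in> dual_lat \<sigma>"
  shows "closedin (chart_topology F \<sigma>) {p \<in> toric_chart F \<sigma>. snd p m = c}"
  using closedin_continuous_map_preimage[OF coord_cont[OF assms] closed_singleton[of c, unfolded closed_closedin]]
  by (simp add: topspace_chart)

lemma coord_closed_all: assumes "finite B" "\<forall>b\<in>B. s b \<in> dual_lat \<sigma>"
  shows "closedin (chart_topology F \<sigma>) {p \<in> toric_chart F \<sigma>. \<forall>b\<in>B. snd p (s b) = c b}"
proof -
  have "{p \<in> toric_chart F \<sigma>. \<forall>b\<in>B. snd p (s b) = c b} =
    \<Inter>(insert (toric_chart F \<sigma>) ((\<lambda>b. {p \<in> toric_chart F \<sigma>. snd p (s b) = c b}) ` B))" by auto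
  moreover have "closedin (chart_topology F \<sigma>) \<dots>"
    by (rule closedin_Inter) (auto intro: coord_closed assms(2)[rule_format] closedin_topspace[of "chart_topology F \<sigma>", unfolded topspace_chart])
  ultimately show ?thesis by simp
qed



definition Zset :: "(real^'n) set set \<Rightarrow> (int^'n) set \<Rightarrow> (int^'n \<Rightarrow> complex) \<Rightarrow> 'n toric_pt set" where
  "Zset H Gm phi = {p \<in> toric_points H. (\<forall>v\<in>fst p. \<forall>chi\<in>Gm. pairing chi v = 0) \<and> (\<forall>chi\<in>Gm. snd p chi = phi chi)}"

lemma pairing_add: "pairing (a + b) v = pairing a v + pairing b v"
  by (simp add: pairing_inner lat_add inner_add_left)

lemma pairing_zero: "pairing 0 v = 0"
  by (simp add: pairing_def)

lemma perp_subgroup: "lattice_subgroup (perp \<tau>)"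
  unfolding lattice_subgroup_def perp_def by (simp add: pairing_add pairing_neg pairing_zero)

lemma pointsD: assumes "p \<in> toric_points H"
  shows "fst p \<in> H" "char_hom (perp (fst p)) (snd p)" "\<And>m. m \<notin> perp (fst p) \<Longrightarrow> snd p m = 0"
  using assms unfolding toric_points_def char_hom_def by auto

lemma int_span_sub: assumes "lattice_subgroup H" "finite B" "B \<subseteq> H" shows "int_span B \<subseteq> H"
proof
  fix x assume "x \<in> int_span B"
  then obtain c where c: "x = (\<Sum>b\<in>B. c b *s b)" unfolding int_span_def by blast
  have ch: "char_hom H (\<lambda>_. 1)" unfolding char_hom_def by simp
  have "\<forall>b\<in>B. c b *s b \<in> H" using hom_smult[OF assms(1) ch] assms(3) by blast
  then show "x \<in> H" unfolding c using hom_sum[OF assms(1) ch assms(2), of "\<lambda>b. c b *s b"] by simp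
qed

lemma hom_agree: assumes "lattice_subgroup Gm" "integral_basis Gm B" "lattice_subgroup P" "Gm \<subseteq> P"
  "char_hom P g" "char_hom Gm f" "\<forall>b\<in>B. g b = f b"
  shows "\<forall>chi\<in>Gm. g chi = f chi"
proof
  fix chi assume "chi \<in> Gm"
  then obtain c where c: "chi = (\<Sum>b\<in>B. c b *s b)" using assms(2) unfolding integral_basis_def int_span_def by blast
  have fin: "finite B" and BG: "B \<subseteq> Gm" using assms(2) unfolding integral_basis_def by auto
  have g: "g chi = (\<Prod>b\<in>B. g b powi c b)"
  proof -
    have "\<forall>b\<in>B. c b *s b \<in> P \<and> g (c b *s b) = g b powi c b" using hom_smult[OF assms(3,5)] BG assms(4) by blast
    then show ?thesis unfolding c using hom_sum[OF assms(3,5) fin, of "\<lambda>b. c b *s b"] by simp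
  qed
  have f: "f chi = (\<Prod>b\<in>B. f b powi c b)"
  proof -
    have "\<forall>b\<in>B. c b *s b \<in> Gm \<and> f (c b *s b) = f b powi c b" using hom_smult[OF assms(1,6)] BG by blast
    then show ?thesis unfolding c using hom_sum[OF assms(1,6) fin, of "\<lambda>b. c b *s b"] by simp
  qed
  show "g chi = f chi" unfolding g f using assms(7) by simp
qed

lemma Z_closed: assumes "fan H" "lattice_subgroup Gm" "char_hom Gm phi" "integral_basis Gm B" "equal_sign H B"
  shows "closedin (toric_topology H) (Zset H Gm phi)"
proof (rule closedin_toric)
  show "Zset H Gm phi \<subseteq> toric_points H" unfolding Zset_def by blast
  have fin: "finite B" and BG: "B \<subseteq> Gm" and spanG: "int_span B = Gm"
    using assms(4) unfolding integral_basis_def by auto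
  show "\<forall>\<sigma>\<in>H. closedin (chart_topology H \<sigma>) (Zset H Gm phi \<inter> toric_chart H \<sigma>)"
  proof
    fix \<sigma> assume sH: "\<sigma> \<in> H"
    define s where "s b = (if \<forall>v\<in>\<sigma>. pairing b v \<ge> 0 then b else - b)" for b
    have sd: "\<forall>b\<in>B. s b \<in> dual_lat \<sigma>"
    proof
      fix b assume b: "b \<in> B"
      have "(\<forall>v\<in>\<sigma>. pairing b v \<ge> 0) \<or> (\<forall>v\<in>\<sigma>. pairing b v \<le> 0)"
        using assms(5) b sH unfolding equal_sign_def by blast
      then show "s b \<in> dual_lat \<sigma>" unfolding s_def dual_lat_def by (auto simp: pairing_neg)
    qed
    have sG: "s b \<in> Gm" if "b \<in> B" for b
      using that BG assms(2) unfolding s_def lattice_subgroup_def by auto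
    have eq: "Zset H Gm phi \<inter> toric_chart H \<sigma> = {p \<in> toric_chart H \<sigma>. \<forall>b\<in>B. snd p (s b) = phi (s b)}"
    proof (intro equalityI subsetI)
      fix p assume "p \<in> Zset H Gm phi \<inter> toric_chart H \<sigma>"
      then have "p \<in> toric_chart H \<sigma>" "\<forall>chi\<in>Gm. snd p chi = phi chi" unfolding Zset_def by blast+
      then show "p \<in> {p \<in> toric_chart H \<sigma>. \<forall>b\<in>B. snd p (s b) = phi (s b)}"
        using sG by blast
    next
      fix p assume p: "p \<in> {p \<in> toric_chart H \<sigma>. \<forall>b\<in>B. snd p (s b) = phi (s b)}"
      have pc: "p \<in> toric_chart H \<sigma>" and pv: "\<forall>b\<in>B. snd p (s b) = phi (s b)" using p by blast+
      have pp: "p \<in> toric_points H" using pc chart_sub by blast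
      note P = pointsD[OF pp]
      have inperp: "s b \<in> perp (fst p)" if b: "b \<in> B" for b
      proof (rule ccontr)
        assume "s b \<notin> perp (fst p)"
        then have "snd p (s b) = 0" using P(3) by blast
        moreover have "phi (s b) \<noteq> 0" using assms(3) sG[OF b] unfolding char_hom_def by blast
        ultimately show False using pv b by simp
      qed
      have sor: "s b = b \<or> s b = - b" for b by (simp add: s_def)
      have bperp: "b \<in> perp (fst p)" if b: "b \<in> B" for b
      proof (cases "s b = b")
        case True then show ?thesis using inperp[OF b] by simp
      next
        case False
        then have "s b = - b" using sor by blast
        then have "- b \<in> perp (fst p)" using inperp[OF b] by simp
        then have "- (- b) \<in> perp (fst p)" using perp_subgroup[of "fst p"] unfolding lattice_subgroup_def by blast
        then show ?thesis by simp
      qed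
      have "B \<subseteq> perp (fst p)" using bperp by blast
      then have GP: "Gm \<subseteq> perp (fst p)"
        using int_span_sub[OF perp_subgroup fin] spanG by simp
      have bb: "\<forall>b\<in>B. snd p b = phi b"
      proof
        fix b assume b: "b \<in> B"
        show "snd p b = phi b"
        proof (cases "s b = b")
          case True then show ?thesis using pv b by metis
        next
          case False
          then have sb: "s b = - b" using sor by blast
          have "snd p (-b) = phi (-b)" using pv b sb by metis
          moreover have "snd p (-b) = inverse (snd p b)" using hom_neg[OF perp_subgroup P(2) bperp[OF b]] by simp
          moreover have "phi (-b) = inverse (phi b)" using hom_neg[OF assms(2,3)] BG b by blast
          ultimately show ?thesis by simp
        qed
      qed
      have "\<forall>chi\<in>Gm. snd p chi = phi chi"
        by (rule hom_agree[OF assms(2,4) perp_subgroup GP P(2) assms(3) bb])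
      moreover have "\<forall>v\<in>fst p. \<forall>chi\<in>Gm. pairing chi v = 0" using GP unfolding perp_def by blast
      ultimately show "p \<in> Zset H Gm phi \<inter> toric_chart H \<sigma>" unfolding Zset_def using pp pc by blast
    qed
    show "closedin (chart_topology H \<sigma>) (Zset H Gm phi \<inter> toric_chart H \<sigma>)"
      unfolding eq by (rule coord_closed_all[OF fin sd])
  qed
qed



lemma prod_powi: "(\<Prod>u\<in>B. a u :: complex) powi k = (\<Prod>u\<in>B. a u powi k)"
  by (induction B rule: infinite_finite_induct) (auto simp: power_int_mult_distrib)

lemma powi_sum: assumes "(a::complex) \<noteq> 0" shows "(\<Prod>i\<in>I. a powi e i) = a powi (\<Sum>i\<in>I. e i)"
  by (induction I rule: infinite_finite_induct) (auto simp: power_int_add assms)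

lemma char_val_prod: assumes "finite B0" "\<forall>u\<in>B0. c u \<noteq> 0"
  shows "char_val m (\<chi> i. \<Prod>u\<in>B0. c u powi (u$i)) = (\<Prod>u\<in>B0. c u powi ip m u)"
proof -
  have "char_val m (\<chi> i. \<Prod>u\<in>B0. c u powi (u$i)) = (\<Prod>i\<in>UNIV. \<Prod>u\<in>B0. c u powi (u$i * m$i))"
    unfolding char_val_def by (simp add: prod_powi power_int_mult)
  also have "\<dots> = (\<Prod>u\<in>B0. \<Prod>i\<in>UNIV. c u powi (u$i * m$i))" by (rule prod.swap)
  also have "\<dots> = (\<Prod>u\<in>B0. c u powi ip m u)"
    by (rule prod.cong[OF refl]) (simp add: powi_sum assms(2) ip_def mult.commute)
  finally show ?thesis .
qed

lemma char_val_torus: assumes "t \<in> torus" shows "char_val m t \<noteq> 0"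
  using assms unfolding char_val_def torus_def by (simp add: power_int_not_zero)

lemma char_val_add: assumes "t \<in> torus" shows "char_val (a + b) t = char_val a t * char_val b t"
  using assms unfolding char_val_def torus_def by (simp add: power_int_add prod.distrib)

lemma perp_zero: "perp {0} = UNIV"
  unfolding perp_def by (simp add: pairing_inner)

lemma torus_emb_points: assumes "fan H" "t \<in> torus" shows "torus_emb t \<in> toric_points H"
  unfolding toric_points_def torus_emb_def using fan_zero_cone[OF assms(1)] perp_zero
    char_val_torus[OF assms(2)] char_val_add[OF assms(2)] by auto

lemma torus_emb_chart: assumes "fan H" "\<sigma> \<in> H" "t \<in> torus" shows "torus_emb t \<in> toric_chart H \<sigma>"
  unfolding toric_chart_def using torus_emb_points[OF assms(1,3)] fan_zero[OF assms(1,2)]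
  by (simp add: torus_emb_def)



lemma gen_cone_elem: assumes "finite S" "u \<in> S" shows "lat_to_real u \<in> gen_cone S"
proof -
  have "lat_to_real u = (\<Sum>u'\<in>S. (if u' = u then 1 else 0) *\<^sub>R lat_to_real u')"
    using assms by (simp add: if_distrib[of "\<lambda>z. z *\<^sub>R _"] cong: if_cong)
  then show ?thesis unfolding gen_cone_def by fastforce
qed

lemma perp_gen: assumes "finite S" "\<forall>u\<in>S. ip m u = 0" shows "m \<in> perp (gen_cone S)"
  unfolding perp_def gen_cone_def using assms by (auto simp: pairing_gen)

lemma approx:
  assumes "fan H" "\<rho> \<in> H" "smooth_cone \<rho>" "p \<in> toric_points H" "fst p = \<rho>"
  shows "\<exists>t. (\<forall>k. t k \<in> torus) \<and> (\<forall>k. \<forall>m\<in>perp \<rho>. char_val m (t k) = snd p m) \<and>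
             (\<forall>m\<in>dual_lat \<rho>. ((\<lambda>k. char_val m (t k)) \<longlongrightarrow> snd p m) sequentially)"
proof -
  obtain B0 S where B0: "integral_basis UNIV B0" and SB: "S \<subseteq> B0" and rho: "\<rho> = gen_cone S"
    using assms(3) unfolding smooth_cone_def by blast
  have fin: "finite B0" using B0 unfolding integral_basis_def by blast
  have finS: "finite S" using fin SB finite_subset by blast
  obtain md where md1: "\<forall>u\<in>B0. \<forall>u'\<in>B0. ip (md u) u' = (if u = u' then 1 else 0)"
    and md2: "\<forall>x. x = (\<Sum>u\<in>B0. ip x u *s md u)" using dual_basis[OF B0] by blast
  note P = pointsD[OF assms(4), unfolded assms(5)]
  have mdperp: "md u \<in> perp \<rho>" if "u \<in> B0" "u \<notin> S" for u
    unfolding rho by (rule perp_gen[OF finS]) (use md1 that SB in auto)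
  have mdnz: "snd p (md u) \<noteq> 0" if "u \<in> B0" "u \<notin> S" for u
    using P(2) mdperp[OF that] unfolding char_hom_def by blast
  define s :: "nat \<Rightarrow> complex" where "s k = of_real (inverse (real (Suc k)))" for k
  have snz: "s k \<noteq> 0" for k
  proof -
    have "inverse (real (Suc k)) \<noteq> 0" by simp
    then show ?thesis by (simp only: s_def of_real_eq_0_iff not_False_eq_True)
  qed
  define c where "c k u = (if u \<in> S then s k else snd p (md u))" for k u
  have cnz: "\<forall>u\<in>B0. c k u \<noteq> 0" for k using snz mdnz unfolding c_def by auto
  define t where "t k = (\<chi> i. \<Prod>u\<in>B0. c k u powi (u$i))" for k
  have tor: "t k \<in> torus" for k
    unfolding torus_def t_def using cnz fin by (simp add: power_int_not_zero)
  have cv: "char_val m (t k) = (\<Prod>u\<in>B0. c k u powi ip m u)" for m k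
    unfolding t_def by (rule char_val_prod[OF fin cnz])
  have ipS: "ip m u = 0" if "m \<in> perp \<rho>" "u \<in> S" for m u
  proof -
    have "pairing m (lat_to_real u) = 0" using that gen_cone_elem[OF finS that(2)] unfolding perp_def rho by blast
    then show ?thesis by (simp add: pairing_lat)
  qed
  have ipD: "ip m u \<ge> 0" if "m \<in> dual_lat \<rho>" "u \<in> S" for m u
  proof -
    have "pairing m (lat_to_real u) \<ge> 0" using that gen_cone_elem[OF finS that(2)] unfolding dual_lat_def rho by blast
    then show ?thesis by (simp add: pairing_lat)
  qed
  have eqperp: "char_val m (t k) = snd p m" if m: "m \<in> perp \<rho>" for m k
  proof -
    have each: "ip m u *s md u \<in> perp \<rho> \<and> snd p (ip m u *s md u) = c k u powi ip m u" if u: "u \<in> B0" for u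
    proof (cases "u \<in> S")
      case True
      then have "ip m u *s md u = 0" using ipS[OF m] by (simp add: vec_eq_iff)
      then show ?thesis using ipS[OF m True] hom_zero[OF perp_subgroup P(2)] perp_subgroup[of \<rho>]
        unfolding lattice_subgroup_def by simp
    next
      case False
      then show ?thesis using hom_smult[OF perp_subgroup P(2) mdperp[OF u False]] unfolding c_def by simp
    qed
    have "snd p m = snd p (\<Sum>u\<in>B0. ip m u *s md u)" by (rule arg_cong[OF md2[rule_format]])
    also have "\<dots> = (\<Prod>u\<in>B0. snd p (ip m u *s md u))"
      using hom_sum[OF perp_subgroup P(2) fin, of "\<lambda>u. ip m u *s md u"] each by blast
    also have "\<dots> = (\<Prod>u\<in>B0. c k u powi ip m u)" using each by simp
    finally show ?thesis using cv by simp
  qed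
  have lim: "((\<lambda>k. char_val m (t k)) \<longlongrightarrow> snd p m) sequentially" if m: "m \<in> dual_lat \<rho>" for m
  proof (cases "m \<in> perp \<rho>")
    case True
    then show ?thesis using eqperp by simp
  next
    case False
    have z: "snd p m = 0" using P(3) False by blast
    have "\<exists>u\<in>S. ip m u \<noteq> 0" using False perp_gen[OF finS] rho by blast
    then obtain u0 where u0: "u0 \<in> S" "ip m u0 \<noteq> 0" by blast
    have "ip m u0 > 0" using ipD[OF m u0(1)] u0(2) by simp
    then have Epos: "(\<Sum>u\<in>S. ip m u) > 0"
      by (rule sum_pos2[OF finS u0(1)]) (use ipD[OF m] in blast)
    define E where "E = nat (\<Sum>u\<in>S. ip m u)"
    have E1: "E \<ge> 1" using Epos unfolding E_def by simp
    define C where "C = (\<Prod>u\<in>B0-S. snd p (md u) powi ip m u)"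
    have form: "char_val m (t k) = C * s k ^ E" for k
    proof -
      have "char_val m (t k) = (\<Prod>u\<in>S. c k u powi ip m u) * (\<Prod>u\<in>B0-S. c k u powi ip m u)"
        unfolding cv using prod.subset_diff[OF SB fin] by (simp add: mult.commute)
      also have "(\<Prod>u\<in>S. c k u powi ip m u) = (\<Prod>u\<in>S. s k powi ip m u)" unfolding c_def by simp
      also have "\<dots> = s k powi (\<Sum>u\<in>S. ip m u)" by (rule powi_sum[OF snz])
      also have "\<dots> = s k ^ E" unfolding E_def using Epos by (simp add: power_int_nonneg_exp)
      also have "(\<Prod>u\<in>B0-S. c k u powi ip m u) = C" unfolding C_def c_def by simp
      finally show ?thesis by simp
    qed
    have se: "s = (\<lambda>k. of_real (inverse (real (Suc k))))" by (rule ext) (simp only: s_def)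
    have "((\<lambda>k. of_real (inverse (real (Suc k))) :: complex) \<longlongrightarrow> of_real 0) sequentially"
      by (rule tendsto_of_real[OF LIMSEQ_inverse_real_of_nat])
    then have "(s \<longlongrightarrow> 0) sequentially" unfolding se of_real_0 .
    then have "((\<lambda>k. C * s k ^ E) \<longlongrightarrow> C * 0 ^ E) sequentially"
      by (intro tendsto_intros)
    moreover have "(0::complex) ^ E = 0" using E1 by (simp add: power_0_left)
    ultimately show ?thesis using z form by simp
  qed
  show ?thesis using tor eqperp lim by blast
qed



lemma Z_sub_closure: assumes "fan H" "\<forall>\<sigma>\<in>H. smooth_cone \<sigma>"
  shows "Zset H Gm phi \<subseteq> (toric_topology H) closure_of (torus_emb ` layer Gm phi)"
proof
  fix p assume pZ: "p \<in> Zset H Gm phi"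
  have pp: "p \<in> toric_points H" and pperp: "\<forall>v\<in>fst p. \<forall>chi\<in>Gm. pairing chi v = 0"
    and pphi: "\<forall>chi\<in>Gm. snd p chi = phi chi" using pZ unfolding Zset_def by blast+
  define \<rho> where "\<rho> = fst p"
  have rH: "\<rho> \<in> H" using pointsD(1)[OF pp] unfolding \<rho>_def .
  obtain t where tt: "\<forall>k. t k \<in> torus" "\<forall>k. \<forall>m\<in>perp \<rho>. char_val m (t k) = snd p m"
    "\<forall>m\<in>dual_lat \<rho>. ((\<lambda>k. char_val m (t k)) \<longlongrightarrow> snd p m) sequentially"
    using approx[OF assms(1) rH _ pp \<rho>_def[symmetric]] assms(2) rH by blast
  have GP: "Gm \<subseteq> perp \<rho>" using pperp unfolding perp_def \<rho>_def by blast
  have tK: "t k \<in> layer Gm phi" for k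
    unfolding layer_def using tt(1,2) GP pphi by auto
  have pc: "p \<in> toric_chart H \<rho>" unfolding toric_chart_def \<rho>_def using pp by simp
  define f where "f q = restrict (snd q) (dual_lat \<rho>)" for q :: "'a toric_pt"
  have lim: "limitin (product_topology (\<lambda>_. euclidean) (dual_lat \<rho>)) (\<lambda>k. f (torus_emb (t k))) (f p) sequentially"
    unfolding limitin_componentwise
  proof (intro conjI)
    show "f p \<in> extensional (dual_lat \<rho>)" unfolding f_def by simp
    show "\<forall>\<^sub>F k in sequentially. f (torus_emb (t k)) \<in> topspace (product_topology (\<lambda>_. euclidean) (dual_lat \<rho>))"
      unfolding f_def by simp
    show "\<forall>i\<in>dual_lat \<rho>. limitin euclidean (\<lambda>c. f (torus_emb (t c)) i) (f p i) sequentially"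
      unfolding f_def torus_emb_def using tt(3) by simp
  qed
  show "p \<in> (toric_topology H) closure_of (torus_emb ` layer Gm phi)"
    unfolding in_closure_of
  proof (intro conjI allI impI)
    show "p \<in> topspace (toric_topology H)" using pp topspace_toric by blast
    fix T assume T: "p \<in> T \<and> openin (toric_topology H) T"
    then have "openin (chart_topology H \<rho>) (T \<inter> toric_chart H \<rho>)" using rH unfolding openin_toric by blast
    then obtain U where U: "openin (product_topology (\<lambda>_. euclidean) (dual_lat \<rho>)) U"
      "T \<inter> toric_chart H \<rho> = f -` U \<inter> toric_chart H \<rho>"
      unfolding chart_topology_def openin_pullback_topology f_def by blast
    have "f p \<in> U" using T pc U(2) by blast
    then have "\<forall>\<^sub>F k in sequentially. f (torus_emb (t k)) \<in> U" using limitinD[OF lim U(1)] by blast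
    then obtain N where N: "f (torus_emb (t N)) \<in> U" unfolding eventually_sequentially by blast
    have "torus_emb (t N) \<in> toric_chart H \<rho>" using torus_emb_chart[OF assms(1) rH] tt(1) by blast
    then have "torus_emb (t N) \<in> T" using N U(2) by blast
    then show "\<exists>y. y \<in> torus_emb ` layer Gm phi \<and> y \<in> T" using tK by blast
  qed
qed

lemma closure_eq: assumes "fan H" "\<forall>\<sigma>\<in>H. smooth_cone \<sigma>" "lattice_subgroup Gm" "char_hom Gm phi"
  "integral_basis Gm B" "equal_sign H B"
  shows "(toric_topology H) closure_of (torus_emb ` layer Gm phi) = Zset H Gm phi"
proof
  show "Zset H Gm phi \<subseteq> (toric_topology H) closure_of (torus_emb ` layer Gm phi)"
    by (rule Z_sub_closure[OF assms(1,2)])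
  have "torus_emb ` layer Gm phi \<subseteq> Zset H Gm phi"
  proof
    fix y assume "y \<in> torus_emb ` layer Gm phi"
    then obtain t where t: "t \<in> layer Gm phi" "y = torus_emb t" by blast
    have tt: "t \<in> torus" "\<forall>chi\<in>Gm. char_val chi t = phi chi" using t(1) unfolding layer_def by blast+
    show "y \<in> Zset H Gm phi" unfolding Zset_def t(2)
      using torus_emb_points[OF assms(1) tt(1)] tt(2) by (simp add: torus_emb_def pairing_def)
  qed
  then show "(toric_topology H) closure_of (torus_emb ` layer Gm phi) \<subseteq> Zset H Gm phi"
    by (rule closure_of_minimal[OF _ Z_closed[OF assms(1,3-6)]])
qed



lemma equal_sign_refine: assumes "equal_sign F B" "refinement G F" shows "equal_sign G B"
  unfolding equal_sign_def
proof (intro ballI)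
  fix chi C assume chi: "chi \<in> B" and C: "C \<in> G"
  obtain \<sigma> where s: "\<sigma> \<in> F" "C \<subseteq> \<sigma>" using assms(2) C unfolding refinement_def by blast
  have "(\<forall>v\<in>\<sigma>. pairing chi v \<ge> 0) \<or> (\<forall>v\<in>\<sigma>. pairing chi v \<le> 0)" using assms(1) chi s(1) unfolding equal_sign_def by blast
  then show "(\<forall>v\<in>C. pairing chi v \<ge> 0) \<or> (\<forall>v\<in>C. pairing chi v \<le> 0)" using s(2) by blast
qed

lemma span_perp: assumes "integral_basis Gm B" "\<forall>b\<in>B. pairing b v = 0" "chi \<in> Gm" shows "pairing chi v = 0"
proof -
  obtain c where c: "chi = (\<Sum>b\<in>B. c b *s b)" using assms(1,3) unfolding integral_basis_def int_span_def by blast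
  show ?thesis unfolding c pairing_span using assms(2) by simp
qed

lemma preimage_eq:
  fixes F G :: "(real^'n) set set"
  assumes fF: "fan F" and ref: "refinement G F" and lg: "lattice_subgroup Gm"
    and ib: "integral_basis Gm B" and es: "equal_sign F B"
  shows "{p \<in> toric_points G. toric_refinement_map F p \<in> Zset F Gm phi} = Zset G Gm phi"
proof (intro equalityI subsetI)
  have fG: "fan G" using ref unfolding refinement_def by blast
  have BG: "B \<subseteq> Gm" using ib unfolding integral_basis_def by blast
  fix p :: "'n toric_pt"
  let ?\<sigma> = "min_cone F (fst p)"
  have psi: "toric_refinement_map F p = (?\<sigma>, \<lambda>m. if m \<in> perp ?\<sigma> then snd p m else 0)"
    unfolding toric_refinement_map_def Let_def by simp
  {
    assume "p \<in> {p \<in> toric_points G. toric_refinement_map F p \<in> Zset F Gm phi}"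
    then have pp: "p \<in> toric_points G" and Z: "(?\<sigma>, \<lambda>m. if m \<in> perp ?\<sigma> then snd p m else 0) \<in> Zset F Gm phi"
      using psi by auto
    have rG: "fst p \<in> G" using pointsD(1)[OF pp] .
    have sub: "fst p \<subseteq> ?\<sigma>" using min_cone_props[OF fF ref rG] by blast
    have Zp: "\<forall>v\<in>?\<sigma>. \<forall>chi\<in>Gm. pairing chi v = 0" "\<forall>chi\<in>Gm. (if chi \<in> perp ?\<sigma> then snd p chi else 0) = phi chi"
      using Z unfolding Zset_def by auto
    have GP: "Gm \<subseteq> perp ?\<sigma>" using Zp(1) unfolding perp_def by blast
    have "\<forall>chi\<in>Gm. snd p chi = phi chi"
    proof
      fix chi assume c: "chi \<in> Gm"
      then have "chi \<in> perp ?\<sigma>" using GP by blast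
      then show "snd p chi = phi chi" using Zp(2) c by force
    qed
    then show "p \<in> Zset G Gm phi" unfolding Zset_def using pp sub Zp(1) by blast
  }
  {
    assume pZ: "p \<in> Zset G Gm phi"
    have pp: "p \<in> toric_points G" and pperp: "\<forall>v\<in>fst p. \<forall>chi\<in>Gm. pairing chi v = 0"
      and pphi: "\<forall>chi\<in>Gm. snd p chi = phi chi" using pZ unfolding Zset_def by blast+
    have rG: "fst p \<in> G" using pointsD(1)[OF pp] .
    note mc = min_cone_props[OF fF ref rG]
    have "\<forall>v\<in>?\<sigma>. \<forall>b\<in>B. pairing b v = 0"
      by (rule min_cone_perp[OF fF ref rG es]) (use pperp BG in blast)
    then have sp: "\<forall>v\<in>?\<sigma>. \<forall>chi\<in>Gm. pairing chi v = 0" using span_perp[OF ib] by blast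
    then have GP: "Gm \<subseteq> perp ?\<sigma>" unfolding perp_def by blast
    have PP: "perp ?\<sigma> \<subseteq> perp (fst p)" using mc(2) unfolding perp_def by blast
    have ch: "char_hom (perp (fst p)) (snd p)" using pointsD(2)[OF pp] .
    have ps: "lattice_subgroup (perp ?\<sigma>)" by (rule perp_subgroup)
    have c3: "\<forall>m\<in>perp ?\<sigma>. snd p m \<noteq> 0" using PP ch unfolding char_hom_def by blast
    have c4: "\<forall>a\<in>perp ?\<sigma>. \<forall>b\<in>perp ?\<sigma>. snd p (a + b) = snd p a * snd p b \<and> a + b \<in> perp ?\<sigma>"
      using PP ch ps unfolding char_hom_def lattice_subgroup_def by blast
    have "(?\<sigma>, \<lambda>m. if m \<in> perp ?\<sigma> then snd p m else 0) \<in> toric_points F"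
      unfolding toric_points_def using mc(1) c3 c4 by simp
    then have "toric_refinement_map F p \<in> Zset F Gm phi" unfolding psi Zset_def
      using sp GP pphi by auto
    then show "p \<in> {p \<in> toric_points G. toric_refinement_map F p \<in> Zset F Gm phi}" using pp by blast
  }
qed

theorem proposition5p1:
  fixes A :: "(complex^'n) set set"
    and F G :: "(real^'n) set set"
  assumes "saturated_toric_arrangement A"
    and "smooth_projective_fan F"
    and "compatible F A"
    and "smooth_projective_fan G"
    and "refinement G F"
  shows "(\<forall>K\<in>A. {p \<in> toric_points G. toric_refinement_map F p \<in>
              (toric_topology F) closure_of (torus_emb ` K)}
            = (toric_topology G) closure_of (torus_emb ` K))
         \<and> compatible G A"
proof
  have fF: "fan F" "\<forall>\<sigma>\<in>F. smooth_cone \<sigma>" using assms(2) unfolding smooth_projective_fan_def by blast+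
  have fG: "fan G" "\<forall>\<sigma>\<in>G. smooth_cone \<sigma>" using assms(4) unfolding smooth_projective_fan_def by blast+
  show "compatible G A" unfolding compatible_def
  proof (intro allI impI)
    fix Gm phi G' psi
    assume h: "split_summand Gm \<and> char_hom Gm phi \<and> split_summand G' \<and> char_hom G' psi \<and>
       layer Gm phi \<in> A \<and> layer G' psi \<in> A \<and> layer Gm phi \<subseteq> layer G' psi"
    then obtain B where "integral_basis Gm B" "equal_sign F B" "integral_basis G' (B \<inter> G')"
      using assms(3) unfolding compatible_def by blast
    then show "\<exists>B. integral_basis Gm B \<and> equal_sign G B \<and> integral_basis G' (B \<inter> G')"
      using equal_sign_refine[OF _ assms(5)] by blast
  qed
  show "\<forall>K\<in>A. {p \<in> toric_points G. toric_refinement_map F p \<in>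
              (toric_topology F) closure_of (torus_emb ` K)}
            = (toric_topology G) closure_of (torus_emb ` K)"
  proof
    fix K assume K: "K \<in> A"
    then have "is_layer K" using assms(1) unfolding saturated_toric_arrangement_def by blast
    then obtain Gm phi where g: "split_summand Gm" "char_hom Gm phi" "K = layer Gm phi"
      unfolding is_layer_def by blast
    have lg: "lattice_subgroup Gm" using g(1) unfolding split_summand_def by blast
    obtain B where B: "integral_basis Gm B" "equal_sign F B"
      using assms(3) g K unfolding compatible_def by blast
    have esG: "equal_sign G B" using equal_sign_refine[OF B(2) assms(5)] .
    show "{p \<in> toric_points G. toric_refinement_map F p \<in>
              (toric_topology F) closure_of (torus_emb ` K)}
            = (toric_topology G) closure_of (torus_emb ` K)"
      unfolding g(3) closure_eq[OF fF lg g(2) B] closure_eq[OF fG lg g(2) B(1) esG]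
      by (rule preimage_eq[OF fF(1) assms(5) lg B])
  qed
qed

end
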